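(* Let $n$ agents communicate over an undirected connected graph with adjacency matrix $A=[a_{ij}]\in\{0,1\}^{n\times n}$ and Laplacian $L=D-A$, where $D=\mathrm{diag}(d_1,\dots,d_n)$, $d_i=\sum_j a_{ij}$; let $\lambda_2(L)$ be the second smallest eigenvalue of $L$. Each agent $i$ has a bounded reference signal $r_i:[0,\infty)\to\mathbb{R}^m$ with bounded derivative $\dot r_i=f_i$. Each agent decomposes its data into two parts: vectors $r_i^\alpha(0),r_i^\beta(0)\in\mathbb{R}^m$ with $r_i^\alpha(0)+r_i^\beta(0)=2r_i(0)$, and bounded signals $f_i^\alpha,f_i^\beta$ with $f_i^\alpha(t)+f_i^\beta(t)=2f_i(t)$ for all $t$. The sub-states evolve as $$\begin{aligned} \dot x_i^\alpha(t)&=f_i^\alpha(t)+\kappa\sum_{j=1}^n a_{ij}\big(x_j^\alpha(t)-x_i^\alpha(t)\big)+\kappa\big(x_i^\beta(t)-x_i^\alpha(t)\big),\\ \dot x_i^\beta(t)&=f_i^\beta(t)+\kappa\big(x_i^\alpha(t)-x_i^\beta(t)\big),\\ x_i^\alpha(0)&=r_i^\alpha(0),\quad x_i^\beta(0)=r_i^\beta(0),\qquad i=1,\dots,n, \end{aligned}$$ with a constant $\kappa>0$. Then all sub-states $x_i^\alpha,x_i^\beta$ are input-to-state stable, and the tracking errors $x_i^\alpha(t)-\frac1n\sum_{j=1}^n r_j(t)$ and $x_i^\beta(t)-\frac1n\sum_{j=1}^n r_j(t)$ are ultimately bounded. Moreover, the convergence rate of the tracking errors (to their ultimate bound) is no worse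 than $\frac{\kappa}{2}\Big(\lambda_2(L)+2-\sqrt{\lambda_2^2(L)+4}\Big)$.
   Context: Input-to-state stability and ultimate boundedness are in the standard sense (inputs being the reference-derivative signals). "Convergence rate no worse than $c$" means the tracking errors approach their ultimate bound exponentially with exponent at least $c$.
   Formalization: Input-to-state stability is asserted for the stacked tracking errors $x_i^\alpha(t)-\frac1n\sum_{j=1}^n r_j(t)$ and $x_i^\beta(t)-\frac1n\sum_{j=1}^n r_j(t)$, with inputs $f_i^\alpha,f_i^\beta$, in place of the sub-states $x_i^\alpha,x_i^\beta$ themselves. Each condition added here is assumed in the paper as well or is needed for the statement above to hold. *)

theory Defs
  imports "HOL-Analysis.Analysis" "Jordan_Normal_Form.Char_Poly"
begin

definition undirected_graph :: "nat \<Rightarrow> (nat \<Rightarrow> nat \<Rightarrow> real) \<Rightarrow> bool" where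
  "undirected_graph n a \<longleftrightarrow>
     (\<forall>i<n. \<forall>j<n. a i j \<in> {0, 1} \<and> a i j = a j i) \<and> (\<forall>i<n. a i i = 0)"

definition graph_connected :: "nat \<Rightarrow> (nat \<Rightarrow> nat \<Rightarrow> real) \<Rightarrow> bool" where
  "graph_connected n a \<longleftrightarrow>
     (\<forall>i<n. \<forall>j<n. (\<lambda>x y. x < n \<and> y < n \<and> a x y = 1)\<^sup>*\<^sup>* i j)"

definition laplacian :: "nat \<Rightarrow> (nat \<Rightarrow> nat \<Rightarrow> real) \<Rightarrow> real mat" where
  "laplacian n a = mat n n (\<lambda>(i, j). (if i = j then (\<Sum>k<n. a i k) else 0) - a i j)"

definition lambda2 :: "real mat \<Rightarrow> real" where
  "lambda2 M = sorted_list_of_multiset (proots (char_poly M)) ! 1"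

definition class_K :: "(real \<Rightarrow> real) \<Rightarrow> bool" where
  "class_K g \<longleftrightarrow> continuous_on {0..} g \<and> g 0 = 0 \<and> strict_mono_on {0..} g"

definition class_KL :: "(real \<Rightarrow> real \<Rightarrow> real) \<Rightarrow> bool" where
  "class_KL b \<longleftrightarrow>
     (\<forall>t\<ge>0. class_K (\<lambda>s. b s t)) \<and>
     (\<forall>s\<ge>0. antimono_on {0..} (\<lambda>t. b s t) \<and> ((\<lambda>t. b s t) \<longlongrightarrow> 0) at_top)"

definition ref_avg :: "nat \<Rightarrow> (nat \<Rightarrow> real \<Rightarrow> 'v::real_vector) \<Rightarrow> real \<Rightarrow> 'v" where
  "ref_avg n r t = (1 / real n) *\<^sub>R (\<Sum>j<n. r j t)"

definition err_norm :: "nat \<Rightarrow> (nat \<Rightarrow> real \<Rightarrow> 'v::real_normed_vector) \<Rightarrow>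
    (nat \<Rightarrow> real \<Rightarrow> 'v) \<Rightarrow> (nat \<Rightarrow> real \<Rightarrow> 'v) \<Rightarrow> real \<Rightarrow> real" where
  "err_norm n r xa xb t =
     sqrt (\<Sum>i<n. (norm (xa i t - ref_avg n r t))\<^sup>2 + (norm (xb i t - ref_avg n r t))\<^sup>2)"

definition inp_norm :: "nat \<Rightarrow> (nat \<Rightarrow> real \<Rightarrow> 'v::real_normed_vector) \<Rightarrow>
    (nat \<Rightarrow> real \<Rightarrow> 'v) \<Rightarrow> real \<Rightarrow> real" where
  "inp_norm n fa fb s = sqrt (\<Sum>i<n. (norm (fa i s))\<^sup>2 + (norm (fb i s))\<^sup>2)"

definition tracking_system ::
  "nat \<Rightarrow> (nat \<Rightarrow> nat \<Rightarrow> real) \<Rightarrow> real \<Rightarrow>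
   (nat \<Rightarrow> real \<Rightarrow> 'v::euclidean_space) \<Rightarrow> (nat \<Rightarrow> real \<Rightarrow> 'v) \<Rightarrow>
   (nat \<Rightarrow> 'v) \<Rightarrow> (nat \<Rightarrow> 'v) \<Rightarrow> (nat \<Rightarrow> real \<Rightarrow> 'v) \<Rightarrow> (nat \<Rightarrow> real \<Rightarrow> 'v) \<Rightarrow>
   (nat \<Rightarrow> real \<Rightarrow> 'v) \<Rightarrow> (nat \<Rightarrow> real \<Rightarrow> 'v) \<Rightarrow> bool" where
  "tracking_system n a \<kappa> r f ra0 rb0 fa fb xa xb \<longleftrightarrow>
     (\<forall>i<n.
        bounded (r i ` {0..}) \<and> bounded (f i ` {0..}) \<and>
        (\<forall>t\<ge>0. (r i has_vector_derivative f i t) (at t within {0..})) \<and>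
        ra0 i + rb0 i = 2 *\<^sub>R r i 0 \<and>
        bounded (fa i ` {0..}) \<and> bounded (fb i ` {0..}) \<and>
        (\<forall>t\<ge>0. fa i t + fb i t = 2 *\<^sub>R f i t) \<and>
        (\<forall>t\<ge>0. (xa i has_vector_derivative
              (fa i t + \<kappa> *\<^sub>R (\<Sum>j<n. a i j *\<^sub>R (xa j t - xa i t))
                      + \<kappa> *\<^sub>R (xb i t - xa i t))) (at t within {0..})) \<and>
        (\<forall>t\<ge>0. (xb i has_vector_derivative
              (fb i t + \<kappa> *\<^sub>R (xa i t - xb i t))) (at t within {0..})) \<and>
        xa i 0 = ra0 i \<and> xb i 0 = rb0 i)"

end

theory Submission
  imports Defs
begin



definition Lv :: "nat \<Rightarrow> (nat\<Rightarrow>nat\<Rightarrow>real) \<Rightarrow> (nat\<Rightarrow>real) \<Rightarrow> nat \<Rightarrow> real" where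
  "Lv n a y i = (\<Sum>j<n. a i j * (y i - y j))"

lemma lap_carrier: "laplacian n a \<in> carrier_mat n n"
  by (simp add: laplacian_def)

lemma lap_mult: "laplacian n a *\<^sub>v Matrix.vec n y = Matrix.vec n (\<lambda>i. Lv n a y i)"
proof (rule eq_vecI)
  fix i assume i: "i < dim_vec (Matrix.vec n (Lv n a y))"
  hence i: "i < n" by simp
  have "vec_index (laplacian n a *\<^sub>v Matrix.vec n y) i = (\<Sum>j<n. ((if i = j then (\<Sum>k<n. a i k) else 0) - a i j) * y j)"
    using i by (auto simp: laplacian_def mult_mat_vec_def scalar_prod_def row_def atLeast0LessThan intro!: sum.cong)
  also have "\<dots> = (\<Sum>j<n. (if i = j then (\<Sum>k<n. a i k) * y j else 0) - a i j * y j)"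
    by (rule sum.cong) (auto simp: algebra_simps)
  also have "\<dots> = (\<Sum>k<n. a i k) * y i - (\<Sum>j<n. a i j * y j)"
    using i by (simp add: sum_subtractf sum.delta)
  also have "\<dots> = Lv n a y i"
    by (simp add: Lv_def right_diff_distrib sum_subtractf sum_distrib_left mult.commute)
  finally show "vec_index (laplacian n a *\<^sub>v Matrix.vec n y) i = vec_index (Matrix.vec n (Lv n a y)) i" using i by simp
qed (simp add: laplacian_def)


lemma eig_root:
  assumes "\<And>i. i < n \<Longrightarrow> Lv n a y i = mu * y i" and "\<exists>i<n. y i \<noteq> 0"
  shows "poly (char_poly (laplacian n a)) mu = 0"
proof -
  have "eigenvector (laplacian n a) (Matrix.vec n y) mu"
    unfolding eigenvector_def
  proof (intro conjI)
    show "Matrix.vec n y \<in> carrier_vec (dim_row (laplacian n a))" by (simp add: laplacian_def)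
    show "Matrix.vec n y \<noteq> 0\<^sub>v (dim_row (laplacian n a))" using assms(2)
      by (auto simp: laplacian_def vec_eq_iff)
    show "laplacian n a *\<^sub>v Matrix.vec n y = mu \<cdot>\<^sub>v Matrix.vec n y"
      unfolding lap_mult using assms(1) by (auto simp: vec_eq_iff)
  qed
  hence "eigenvalue (laplacian n a) mu" unfolding eigenvalue_def by blast
  thus ?thesis using eigenvalue_root_char_poly[OF lap_carrier] by blast
qed

lemma lambda2_le:
  assumes "poly (char_poly (laplacian n a)) 0 = 0" "poly (char_poly (laplacian n a)) mu = 0" "mu > 0"
  shows "lambda2 (laplacian n a) \<le> mu"
proof -
  let ?p = "char_poly (laplacian n a)"
  have p0: "?p \<noteq> 0" using degree_monic_char_poly[OF lap_carrier, of n a] by auto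
  define s where "s = sorted_list_of_multiset (proots ?p)"
  have ss: "sorted s" unfolding s_def by simp
  have set_s: "set s = {x. poly ?p x = 0}" unfolding s_def using p0 by simp
  have "0 \<in> set s" using assms(1) set_s by simp
  then obtain i where i: "i < length s" "s ! i = 0" by (auto simp: in_set_conv_nth)
  have "mu \<in> set s" using assms(2) set_s by simp
  then obtain j where j: "j < length s" "s ! j = mu" by (auto simp: in_set_conv_nth)
  have ij: "i \<noteq> j" using i j assms(3) by auto
  define k where "k = max i j"
  have k: "1 \<le> k" "k < length s" using ij i j by (auto simp: k_def)
  have "s ! 1 \<le> s ! k" using sorted_nth_mono[OF ss k(1) k(2)] .
  also have "s ! k \<le> mu" using i j assms(3) by (auto simp: k_def max_def)
  finally show ?thesis unfolding lambda2_def s_def .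
qed

definition Qf :: "nat \<Rightarrow> (nat\<Rightarrow>nat\<Rightarrow>real) \<Rightarrow> (nat\<Rightarrow>real) \<Rightarrow> real" where
  "Qf n a y = (\<Sum>i<n. y i * Lv n a y i)"

lemma compact_box:
  "compact {y::nat\<Rightarrow>real. \<forall>i. y i \<in> (if i < n then {-1..1} else {0})}"
proof -
  have "compactin (product_topology (\<lambda>i. euclidean) UNIV)
          (PiE UNIV (\<lambda>i. if i < n then {-1..1::real} else {0}))"
    by (subst compactin_PiE) auto
  moreover have "PiE UNIV (\<lambda>i. if i < n then {-1..1::real} else {0})
      = {y::nat\<Rightarrow>real. \<forall>i. y i \<in> (if i < n then {-1..1} else {0})}"
    by (auto simp: PiE_def Pi_def)
  ultimately show ?thesis by (simp add: euclidean_product_topology)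
qed

lemma cont_Qf: "continuous_on A (Qf n a)"
  unfolding Qf_def Lv_def
  by (intro continuous_intros continuous_on_subset[OF continuous_on_product_coordinates]) auto

lemma cont_sum: "continuous_on A (\<lambda>y::nat\<Rightarrow>real. \<Sum>i<n. y i)"
  by (intro continuous_intros continuous_on_subset[OF continuous_on_product_coordinates]) auto

lemma cont_sumsq: "continuous_on A (\<lambda>y::nat\<Rightarrow>real. \<Sum>i<n. (y i)^2)"
  by (intro continuous_intros continuous_on_subset[OF continuous_on_product_coordinates]) auto

lemma compact_S:
  "compact ({y::nat\<Rightarrow>real. \<forall>i. y i \<in> (if i < n then {-1..1} else {0})}
     \<inter> {y. (\<Sum>i<n. y i) = 0} \<inter> {y. (\<Sum>i<n. (y i)^2) = 1})"
proof -
  have c1: "closed {y::nat\<Rightarrow>real. (\<Sum>i<n. y i) = 0}"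
    using closed_Collect_eq[OF cont_sum[of UNIV n] continuous_on_const[of UNIV "0::real"]] by simp
  have c2: "closed {y::nat\<Rightarrow>real. (\<Sum>i<n. (y i)^2) = 1}"
    using closed_Collect_eq[OF cont_sumsq[of UNIV n] continuous_on_const[of UNIV "1::real"]] by simp
  show ?thesis by (rule compact_Int_closed[OF compact_Int_closed[OF compact_box c1] c2])
qed



definition symm :: "nat \<Rightarrow> (nat\<Rightarrow>nat\<Rightarrow>real) \<Rightarrow> bool" where
  "symm n a \<longleftrightarrow> (\<forall>i<n. \<forall>j<n. a i j = a j i)"

lemma swap_sym:
  assumes "symm n a"
  shows "(\<Sum>i<n. \<Sum>j<n. a i j * F i j) = (\<Sum>i<n. \<Sum>j<n. a i j * F j i)"
proof -
  have "(\<Sum>i<n. \<Sum>j<n. a i j * F i j) = (\<Sum>j<n. \<Sum>i<n. a i j * F i j)"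
    by (rule sum.swap)
  also have "\<dots> = (\<Sum>j<n. \<Sum>i<n. a j i * F i j)"
    using assms unfolding symm_def by (intro sum.cong refl) auto
  finally show ?thesis .
qed

lemma Lv_sum0:
  assumes "symm n a"
  shows "(\<Sum>i<n. Lv n a y i) = 0"
proof -
  have "(\<Sum>i<n. Lv n a y i) = (\<Sum>i<n. \<Sum>j<n. a i j * y i) - (\<Sum>i<n. \<Sum>j<n. a i j * y j)"
    by (simp add: Lv_def right_diff_distrib sum_subtractf)
  also have "(\<Sum>i<n. \<Sum>j<n. a i j * y j) = (\<Sum>i<n. \<Sum>j<n. a i j * y i)"
    using swap_sym[OF assms, of "\<lambda>i j. y j"] by simp
  finally show ?thesis by simp
qed

lemma B_sym:
  assumes "symm n a"
  shows "(\<Sum>i<n. h i * Lv n a y i) = (\<Sum>i<n. y i * Lv n a h i)"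
proof -
  have e1: "(\<Sum>i<n. h i * Lv n a y i) = (\<Sum>i<n. \<Sum>j<n. a i j * (h i * y i)) - (\<Sum>i<n. \<Sum>j<n. a i j * (h i * y j))"
    by (simp add: Lv_def sum_distrib_left right_diff_distrib sum_subtractf algebra_simps)
  have e2: "(\<Sum>i<n. y i * Lv n a h i) = (\<Sum>i<n. \<Sum>j<n. a i j * (h i * y i)) - (\<Sum>i<n. \<Sum>j<n. a i j * (h j * y i))"
    by (simp add: Lv_def sum_distrib_left right_diff_distrib sum_subtractf algebra_simps)
  have "(\<Sum>i<n. \<Sum>j<n. a i j * (h j * y i)) = (\<Sum>i<n. \<Sum>j<n. a i j * (h i * y j))"
    using swap_sym[OF assms, of "\<lambda>i j. h j * y i"] by simp
  thus ?thesis using e1 e2 by simp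
qed

lemma Qf_half:
  assumes "symm n a"
  shows "Qf n a y = (1/2) * (\<Sum>i<n. \<Sum>j<n. a i j * (y i - y j)^2)"
proof -
  have "(\<Sum>i<n. \<Sum>j<n. a i j * (y i - y j)^2)
      = (\<Sum>i<n. \<Sum>j<n. a i j * (y i * (y i - y j))) + (\<Sum>i<n. \<Sum>j<n. a i j * (y j * (y j - y i)))"
    by (simp add: sum.distrib[symmetric] power2_eq_square algebra_simps)
  also have "(\<Sum>i<n. \<Sum>j<n. a i j * (y j * (y j - y i))) = (\<Sum>i<n. \<Sum>j<n. a i j * (y i * (y i - y j)))"
    using swap_sym[OF assms, of "\<lambda>i j. y j * (y j - y i)"] by simp
  also have "(\<Sum>i<n. \<Sum>j<n. a i j * (y i * (y i - y j))) = Qf n a y"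
    by (simp add: Qf_def Lv_def sum_distrib_left algebra_simps)
  finally show ?thesis by simp
qed

lemma Qf_nonneg:
  assumes "symm n a" "\<forall>i<n. \<forall>j<n. a i j \<ge> 0"
  shows "Qf n a y \<ge> 0"
  unfolding Qf_half[OF assms(1)] using assms(2)
  by (intro mult_nonneg_nonneg sum_nonneg) auto

lemma Lv_lin: "Lv n a (\<lambda>i. y i + s * h i) i = Lv n a y i + s * Lv n a h i"
  unfolding Lv_def sum_distrib_left sum.distrib[symmetric] by (intro sum.cong) (auto simp: algebra_simps)

lemma Qf_lin:
  assumes "symm n a"
  shows "Qf n a (\<lambda>i. y i + s * h i) = Qf n a y + 2 * s * (\<Sum>i<n. h i * Lv n a y i) + s^2 * Qf n a h"
proof -
  have "Qf n a (\<lambda>i. y i + s * h i) = Qf n a y + s * (\<Sum>i<n. y i * Lv n a h i) + s * (\<Sum>i<n. h i * Lv n a y i) + s^2 * Qf n a h"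
    unfolding Qf_def Lv_lin
    by (simp add: sum.distrib sum_distrib_left algebra_simps power2_eq_square)
  thus ?thesis using B_sym[OF assms, of h y] by simp
qed

lemma quad_zero:
  fixes A C :: real
  assumes "\<And>s. 0 \<le> s * A + s^2 * C"
  shows "A = 0"
proof (rule ccontr)
  assume A: "A \<noteq> 0"
  define D where "D = \<bar>C\<bar> + 1"
  have D: "D > 0" unfolding D_def by simp
  define s where "s = - A / (2 * D)"
  have "s^2 * C \<le> s^2 * D" unfolding D_def by (intro mult_left_mono) auto
  moreover have "s * A + s^2 * D = - (A^2) / (4 * D)"
    using D unfolding s_def by (simp add: field_simps power2_eq_square)
  moreover have "- (A^2) / (4 * D) < 0" using A D by (simp add: divide_neg_pos)
  ultimately have "s * A + s^2 * C < 0" by linarith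
  with assms[of s] show False by simp
qed

lemma conn_const:
  assumes "symm n a" "\<forall>i<n. \<forall>j<n. a i j \<in> {0,1}" "graph_connected n a" "Qf n a y = 0"
    "i < n" "j < n"
  shows "y i = y j"
proof -
  have nn: "\<forall>i<n. \<forall>j<n. a i j \<ge> 0"
  proof (intro allI impI)
    fix i j assume "i < n" "j < n"
    hence "a i j = 0 \<or> a i j = 1" using assms(2) by auto
    thus "a i j \<ge> 0" by auto
  qed
  have "(\<Sum>i<n. \<Sum>j<n. a i j * (y i - y j)^2) = 0" using Qf_half[OF assms(1), of y] assms(4) by simp
  hence z: "\<forall>i<n. (\<Sum>j<n. a i j * (y i - y j)^2) = 0"
    using nn by (subst (asm) sum_nonneg_eq_0_iff) (auto intro!: sum_nonneg)
  have edge: "y k = y l" if "k < n" "l < n" "a k l = 1" for k l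
  proof -
    have "\<forall>j<n. a k j * (y k - y j)^2 = 0" using z[rule_format, OF that(1)] nn that(1)
      by (subst (asm) sum_nonneg_eq_0_iff) auto
    hence "(y k - y l)^2 = 0" using that by auto
    thus ?thesis by simp
  qed
  have "(\<lambda>x y. x < n \<and> y < n \<and> a x y = 1)\<^sup>*\<^sup>* i j" using assms(3,5,6) unfolding graph_connected_def by blast
  thus ?thesis
  proof (induction rule: rtranclp_induct)
    case base then show ?case by simp
  next
    case (step k l) then show ?case using edge by metis
  qed
qed



lemma rayleigh:
  assumes n2: "n \<ge> 2" and ug: "undirected_graph n a" and gc: "graph_connected n a"
  shows "\<exists>mu>0. (\<forall>y. (\<Sum>i<n. y i) = 0 \<longrightarrow> Qf n a y \<ge> mu * (\<Sum>i<n. (y i)^2))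
               \<and> lambda2 (laplacian n a) \<le> mu"
proof -
  have sy: "symm n a" using ug unfolding undirected_graph_def symm_def by auto
  have a01: "\<forall>i<n. \<forall>j<n. a i j \<in> {0,1}" using ug unfolding undirected_graph_def by auto
  have nn: "\<forall>i<n. \<forall>j<n. a i j \<ge> 0"
  proof (intro allI impI)
    fix i j assume "i < n" "j < n"
    hence "a i j = 0 \<or> a i j = 1" using a01 by auto
    thus "a i j \<ge> 0" by auto
  qed
  define S where "S = {y::nat\<Rightarrow>real. \<forall>i. y i \<in> (if i < n then {-1..1} else {0})}
     \<inter> {y. (\<Sum>i<n. y i) = 0} \<inter> {y. (\<Sum>i<n. (y i)^2) = 1}"
  have cS: "compact S" unfolding S_def by (rule compact_S)
  define c where "c = 1 / sqrt (2::real)"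
  define y1 where "y1 = (\<lambda>i::nat. (if i = 0 then c else 0) + (if i = 1 then - c else 0))"
  have c2: "c^2 = 1/2" unfolding c_def by (simp add: power_divide)
  have c1: "\<bar>c\<bar> \<le> 1" unfolding c_def by simp
  have "y1 \<in> S"
  proof -
    have "(\<Sum>i<n. y1 i) = 0" unfolding y1_def using n2 by (simp add: sum.distrib)
    moreover have "(\<Sum>i<n. (y1 i)^2) = 1"
    proof -
      have "(\<Sum>i<n. (y1 i)^2) = (\<Sum>i<n. (if i = 0 then c^2 else 0) + (if i = 1 then c^2 else 0))"
        unfolding y1_def by (intro sum.cong) auto
      also have "\<dots> = 1" using n2 c2 by (simp add: sum.distrib)
      finally show ?thesis .
    qed
    moreover have "\<forall>i. y1 i \<in> (if i < n then {-1..1} else {0})"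
      using n2 c1 unfolding y1_def by auto
    ultimately show ?thesis unfolding S_def by blast
  qed
  hence Sne: "S \<noteq> {}" by blast
  obtain y0 where y0S: "y0 \<in> S" and y0min: "\<forall>y\<in>S. Qf n a y0 \<le> Qf n a y"
    using continuous_attains_inf[OF cS Sne cont_Qf] by blast
  define mu where "mu = Qf n a y0"
  have y0sum: "(\<Sum>i<n. y0 i) = 0" and y0sq: "(\<Sum>i<n. (y0 i)^2) = 1"
    using y0S unfolding S_def by auto
  have mu0: "mu \<ge> 0" unfolding mu_def by (rule Qf_nonneg[OF sy nn])
  have mupos: "mu > 0"
  proof (rule ccontr)
    assume "\<not> mu > 0"
    hence q0: "Qf n a y0 = 0" using mu0 unfolding mu_def by simp
    have const: "y0 i = y0 0" if "i < n" for i
      by (rule conn_const[OF sy a01 gc q0 that]) (use n2 in simp)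
    have "(\<Sum>i<n. y0 i) = (\<Sum>i<n. y0 0)" by (intro sum.cong refl const) simp
    hence "(\<Sum>i<n. y0 i) = real n * y0 0" by simp
    hence z0: "y0 0 = 0" using y0sum n2 by simp
    have "(\<Sum>i<n. (y0 i)^2) = (\<Sum>i<n. (y0 0)^2)" by (intro sum.cong refl arg_cong[where f="\<lambda>x. x^2"] const) simp
    hence "(\<Sum>i<n. (y0 i)^2) = 0" using z0 by simp
    thus False using y0sq by simp
  qed
  have ray: "Qf n a y \<ge> mu * (\<Sum>i<n. (y i)^2)" if ys: "(\<Sum>i<n. y i) = 0" for y
  proof (cases "(\<Sum>i<n. (y i)^2) = 0")
    case True
    then show ?thesis using Qf_nonneg[OF sy nn] by simp
  next
    case False
    define r where "r = (\<Sum>i<n. (y i)^2)"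
    have r0: "r > 0" using False unfolding r_def by (simp add: sum_nonneg order_less_le)
    define w where "w = (\<lambda>i. if i < n then y i / sqrt r else 0)"
    have wS: "w \<in> S"
    proof -
      have "(\<Sum>i<n. w i) = (\<Sum>i<n. y i) / sqrt r" unfolding w_def by (simp add: sum_divide_distrib)
      hence s1: "(\<Sum>i<n. w i) = 0" using ys by simp
      have "(\<Sum>i<n. (w i)^2) = (\<Sum>i<n. (y i)^2) / r" unfolding w_def using r0
        by (simp add: sum_divide_distrib power_divide)
      hence s2: "(\<Sum>i<n. (w i)^2) = 1" using r0 unfolding r_def by simp
      have "w i \<in> {-1..1}" if "i < n" for i
      proof -
        have "(y i)^2 \<le> r" unfolding r_def
          by (rule member_le_sum[of i "{..<n}" "\<lambda>i. (y i)^2", simplified]) (use that in auto)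
        hence "(w i)^2 \<le> 1" unfolding w_def using that r0 by (simp add: power_divide)
        thus ?thesis by (simp add: abs_square_le_1 abs_le_iff)
      qed
      thus ?thesis unfolding S_def using s1 s2 by (auto simp: w_def)
    qed
    have qw: "Qf n a w = Qf n a y / r"
    proof -
      have "Qf n a w = (\<Sum>i<n. (y i / sqrt r) * (\<Sum>j<n. a i j * (y i / sqrt r - y j / sqrt r)))"
        unfolding Qf_def Lv_def w_def by (intro sum.cong refl) (auto intro!: sum.cong)
      also have "\<dots> = (\<Sum>i<n. y i * (\<Sum>j<n. a i j * (y i - y j))) / (sqrt r * sqrt r)"
        by (simp add: sum_divide_distrib sum_distrib_left diff_divide_distrib[symmetric] field_simps)
      also have "\<dots> = Qf n a y / r" using r0 by (simp add: Qf_def Lv_def)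
      finally show ?thesis .
    qed
    have mw: "mu \<le> Qf n a w" unfolding mu_def using y0min wS by blast
    have "mu * r \<le> Qf n a w * r" using mw r0 by (simp add: mult_right_mono)
    also have "Qf n a w * r = Qf n a y" using qw r0 by simp
    finally have "mu * r \<le> Qf n a y" .
    thus ?thesis unfolding r_def .
  qed
  have crit: "(\<Sum>i<n. h i * Lv n a y0 i) = mu * (\<Sum>i<n. y0 i * h i)" if hs: "(\<Sum>i<n. h i) = 0" for h
  proof -
    have "0 \<le> s * (2 * ((\<Sum>i<n. h i * Lv n a y0 i) - mu * (\<Sum>i<n. y0 i * h i)))
              + s^2 * (Qf n a h - mu * (\<Sum>i<n. (h i)^2))" for s
    proof -
      have "(\<Sum>i<n. y0 i + s * h i) = 0" using y0sum hs by (simp add: sum.distrib sum_distrib_left[symmetric])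
      hence "Qf n a (\<lambda>i. y0 i + s * h i) \<ge> mu * (\<Sum>i<n. (y0 i + s * h i)^2)" by (rule ray)
      moreover have "(\<Sum>i<n. (y0 i + s * h i)^2) = 1 + 2 * s * (\<Sum>i<n. y0 i * h i) + s^2 * (\<Sum>i<n. (h i)^2)"
        using y0sq by (simp add: power2_sum sum.distrib sum_distrib_left power_mult_distrib algebra_simps)
      ultimately show ?thesis unfolding Qf_lin[OF sy] mu_def by (simp add: algebra_simps)
    qed
    from quad_zero[OF this] show ?thesis by simp
  qed
  define g where "g = (\<lambda>i. Lv n a y0 i - mu * y0 i)"
  have gs: "(\<Sum>i<n. g i) = 0" unfolding g_def using Lv_sum0[OF sy] y0sum
    by (simp add: sum_subtractf sum_distrib_left[symmetric])
  have "(\<Sum>i<n. (g i)^2) = (\<Sum>i<n. g i * Lv n a y0 i - mu * (y0 i * g i))"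
    by (intro sum.cong refl) (simp add: g_def power2_eq_square algebra_simps)
  also have "\<dots> = (\<Sum>i<n. g i * Lv n a y0 i) - mu * (\<Sum>i<n. y0 i * g i)"
    by (simp add: sum_subtractf sum_distrib_left)
  finally have "(\<Sum>i<n. (g i)^2) = (\<Sum>i<n. g i * Lv n a y0 i) - mu * (\<Sum>i<n. y0 i * g i)" .
  hence "(\<Sum>i<n. (g i)^2) = 0" using crit[OF gs] by simp
  hence g0: "\<forall>i<n. g i = 0" by (subst (asm) sum_nonneg_eq_0_iff) auto
  have ev: "Lv n a y0 i = mu * y0 i" if "i < n" for i using g0 that unfolding g_def by auto
  have nz: "\<exists>i<n. y0 i \<noteq> 0"
  proof (rule ccontr)
    assume "\<not> (\<exists>i<n. y0 i \<noteq> 0)"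
    hence "(\<Sum>i<n. (y0 i)^2) = 0" by simp
    thus False using y0sq by simp
  qed
  have r1: "poly (char_poly (laplacian n a)) mu = 0" by (rule eig_root[OF ev nz])
  have r0: "poly (char_poly (laplacian n a)) 0 = 0"
    by (rule eig_root[of n a "\<lambda>_. 1"]) (use n2 in \<open>auto simp: Lv_def intro!: exI[of _ 0]\<close>)
  show ?thesis using lambda2_le[OF r0 r1 mupos] ray mupos by blast
qed



definition cc :: "real \<Rightarrow> real" where
  "cc mu = (mu + 2 - sqrt (mu^2 + 4)) / 2"

lemma cc_le1: "cc mu \<le> 1"
proof -
  have "mu \<le> sqrt (mu^2 + 4)" by (rule real_le_rsqrt) simp
  thus ?thesis unfolding cc_def by simp
qed

lemma cc_mono: assumes "x \<le> y" shows "cc x \<le> cc y"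
proof -
  have "sqrt (y^2+4) - sqrt (x^2+4) \<le> y - x"
  proof -
    define sx where "sx = sqrt (x^2+4)"
    define sy where "sy = sqrt (y^2+4)"
    have sx2: "sx^2 = x^2+4" and sy2: "sy^2 = y^2+4" unfolding sx_def sy_def by simp_all
    have sxp: "sx > 0" "sy > 0" unfolding sx_def sy_def by (intro real_sqrt_gt_zero add_nonneg_pos; simp)+
    have xs: "x < sx" "y < sy" unfolding sx_def sy_def
      by (auto intro!: real_less_rsqrt)
    have "(sy - sx) * (sy + sx) = (y - x) * (y + x)" using sx2 sy2 by (simp add: algebra_simps power2_eq_square)
    moreover have "y + x \<le> sy + sx" using xs by simp
    moreover have "sy + sx > 0" using sxp by simp
    ultimately have "(sy - sx) * (sy + sx) \<le> (y - x) * (sy + sx)"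
      using assms by (metis diff_ge_0_iff_ge mult_left_mono)
    hence "sy - sx \<le> y - x" using \<open>sy + sx > 0\<close> by (simp add: mult_le_cancel_right_pos)
    thus ?thesis unfolding sx_def sy_def .
  qed
  thus ?thesis unfolding cc_def by simp
qed

lemma termwise:
  assumes mu: "mu \<ge> 0"
  shows "mu * p^2 + (p - q)^2 - cc mu * (p^2 + q^2) \<ge> 0"
proof -
  define r where "r = sqrt (mu^2 + 4)"
  have r2: "r^2 = mu^2 + 4" unfolding r_def by simp
  define al where "al = (r - mu) / 2"
  define be where "be = (r + mu) / 2"
  have ab: "al * be = 1" unfolding al_def be_def using r2 by (simp add: field_simps power2_eq_square)
  have "mu \<le> r" unfolding r_def by (rule real_le_rsqrt) simp
  hence al0: "al \<ge> 0" unfolding al_def by simp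
  have e: "mu * p^2 + (p - q)^2 - cc mu * (p^2 + q^2) = be * p^2 - 2 * p * q + al * q^2"
    unfolding cc_def r_def[symmetric] al_def be_def by (simp add: field_simps power2_eq_square)
  have "al * (q - be * p)^2 = al * q^2 - 2 * (al * be) * p * q + (al * be) * be * p^2"
    by (simp add: algebra_simps power2_eq_square)
  also have "\<dots> = be * p^2 - 2 * p * q + al * q^2" using ab by simp
  finally have "mu * p^2 + (p - q)^2 - cc mu * (p^2 + q^2) = al * (q - be * p)^2" using e by simp
  thus ?thesis using al0 by simp
qed

lemma Qf_shift:
  assumes "symm n a"
  shows "Qf n a (\<lambda>i. p i + s) = Qf n a p"
proof -
  have "Qf n a (\<lambda>i. p i + 1 * (\<lambda>_. s) i) = Qf n a p + 2 * 1 * (\<Sum>i<n. s * Lv n a p i) + 1^2 * Qf n a (\<lambda>_. s)"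
    by (rule Qf_lin[OF assms])
  moreover have "(\<Sum>i<n. s * Lv n a p i) = 0" using Lv_sum0[OF assms, of p] by (simp add: sum_distrib_left[symmetric])
  moreover have "Qf n a (\<lambda>_. s) = 0" by (simp add: Qf_def Lv_def)
  ultimately show ?thesis by simp
qed

lemma key_scalar:
  assumes sy: "symm n a" and mu: "mu \<ge> 0" and n0: "n > 0"
    and ray: "\<forall>w. (\<Sum>i<n. w i) = 0 \<longrightarrow> Qf n a w \<ge> mu * (\<Sum>i<n. (w i)^2)"
    and yz: "(\<Sum>i<n. y i + z i) = 0"
  shows "Qf n a y + (\<Sum>i<n. (y i - z i)^2) \<ge> cc mu * (\<Sum>i<n. (y i)^2 + (z i)^2)"
proof -
  define s where "s = (\<Sum>i<n. y i) / real n"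
  define p where "p = (\<lambda>i. y i - s)"
  define q where "q = (\<lambda>i. z i + s)"
  have sp: "(\<Sum>i<n. p i) = 0" unfolding p_def s_def using n0 by (simp add: sum_subtractf)
  have sq: "(\<Sum>i<n. q i) = 0" unfolding q_def s_def using n0 yz by (simp add: sum.distrib)
  have "Qf n a y = Qf n a (\<lambda>i. p i + s)" unfolding p_def by simp
  also have "\<dots> = Qf n a p" by (rule Qf_shift[OF sy])
  finally have Qp: "Qf n a y \<ge> mu * (\<Sum>i<n. (p i)^2)" using ray sp by simp
  have T: "mu * (p i)^2 + (y i - z i)^2 - cc mu * ((y i)^2 + (z i)^2)
      = (mu * (p i)^2 + (p i - q i)^2 - cc mu * ((p i)^2 + (q i)^2))
        + (4 - 2 * cc mu) * s * (p i - q i) + (4 - 2 * cc mu) * s^2" for i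
    unfolding p_def q_def by (simp add: algebra_simps power2_eq_square)
  have "(\<Sum>i<n. mu * (p i)^2 + (y i - z i)^2 - cc mu * ((y i)^2 + (z i)^2))
      = (\<Sum>i<n. mu * (p i)^2 + (p i - q i)^2 - cc mu * ((p i)^2 + (q i)^2))
        + (4 - 2 * cc mu) * s * ((\<Sum>i<n. p i) - (\<Sum>i<n. q i)) + real n * ((4 - 2 * cc mu) * s^2)"
    unfolding T sum.distrib by (simp add: sum_distrib_left[symmetric] sum_subtractf)
  also have "\<dots> \<ge> 0"
  proof -
    have "(\<Sum>i<n. mu * (p i)^2 + (p i - q i)^2 - cc mu * ((p i)^2 + (q i)^2)) \<ge> 0"
      by (intro sum_nonneg termwise[OF mu])
    moreover have "real n * ((4 - 2 * cc mu) * s^2) \<ge> 0" using cc_le1[of mu] by simp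
    ultimately show ?thesis using sp sq by simp
  qed
  finally have "(\<Sum>i<n. mu * (p i)^2 + (y i - z i)^2 - cc mu * ((y i)^2 + (z i)^2)) \<ge> 0" .
  hence "(\<Sum>i<n. mu * (p i)^2) + (\<Sum>i<n. (y i - z i)^2) - (\<Sum>i<n. cc mu * ((y i)^2 + (z i)^2)) \<ge> 0"
    by (simp only: sum.distrib sum_subtractf)
  moreover have "(\<Sum>i<n. mu * (p i)^2) = mu * (\<Sum>i<n. (p i)^2)" by (simp add: sum_distrib_left)
  moreover have "(\<Sum>i<n. cc mu * ((y i)^2 + (z i)^2)) = cc mu * (\<Sum>i<n. (y i)^2 + (z i)^2)"
    by (simp only: sum_distrib_left)
  ultimately have "mu * (\<Sum>i<n. (p i)^2) + (\<Sum>i<n. (y i - z i)^2) - cc mu * (\<Sum>i<n. (y i)^2 + (z i)^2) \<ge> 0"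
    by simp
  thus ?thesis using Qp by linarith
qed



lemma decr_interval:
  fixes g g' :: "real \<Rightarrow> real"
  assumes "0 \<le> T"
    and d: "\<And>t. 0 \<le> t \<Longrightarrow> t \<le> T \<Longrightarrow> (g has_real_derivative g' t) (at t within {0..T})"
    and neg: "\<And>t. 0 \<le> t \<Longrightarrow> t \<le> T \<Longrightarrow> g' t \<le> 0"
  shows "g T \<le> g 0"
proof -
  have "\<exists>x\<in>{0..T}. g T - g 0 = (\<lambda>h. g' x * h) (T - 0)"
    by (rule mvt_very_simple[OF assms(1)]) (use d in \<open>auto simp: has_field_derivative_def mult_commute_abs\<close>)
  then obtain x where "x \<in> {0..T}" "g T - g 0 = g' x * T" by auto
  moreover have "g' x * T \<le> 0" using neg[of x] \<open>x \<in> {0..T}\<close> assms(1) by (auto intro: mult_nonpos_nonneg)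
  ultimately show ?thesis by simp
qed

lemma compare:
  fixes V V' :: "real \<Rightarrow> real"
  assumes rho: "rho > 0" and U: "U \<ge> 0" and T: "T \<ge> 0"
    and dV: "\<And>t. 0 \<le> t \<Longrightarrow> t \<le> T \<Longrightarrow> (V has_real_derivative V' t) (at t within {0..T})"
    and V0: "\<And>t. 0 \<le> t \<Longrightarrow> t \<le> T \<Longrightarrow> V t \<ge> 0"
    and ineq: "\<And>t. 0 \<le> t \<Longrightarrow> t \<le> T \<Longrightarrow> V' t \<le> -2 * rho * V t + 2 * sqrt (V t) * U"
  shows "sqrt (V T) \<le> exp (- rho * T) * sqrt (V 0) + U / rho"
proof (rule field_le_epsilon)
  fix e :: real assume e: "e > 0"
  define d where "d = (e/2)^2"
  have d0: "d > 0" unfolding d_def using e by simp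
  have sd: "sqrt d = e/2" unfolding d_def using e by simp
  define K where "K = rho * sqrt d + U"
  define w where "w = (\<lambda>t. sqrt (V t + d))"
  define w' where "w' = (\<lambda>t. V' t / (2 * w t))"
  have wpos: "w t \<ge> sqrt d" if "0 \<le> t" "t \<le> T" for t
    unfolding w_def using V0[OF that] by simp
  have wpos': "w t > 0" if "0 \<le> t" "t \<le> T" for t using wpos[OF that] d0
    by (meson less_le_trans real_sqrt_gt_zero)
  have dw: "(w has_real_derivative w' t) (at t within {0..T})" if "0 \<le> t" "t \<le> T" for t
  proof -
    have "V t + d > 0" using V0[OF that] d0 by simp
    have "((\<lambda>t. sqrt (V t + d)) has_real_derivative inverse (sqrt (V t + d)) / 2 * V' t) (at t within {0..T})"
      by (rule DERIV_chain2[where f=sqrt and g="\<lambda>t. V t + d" and x=t, OF DERIV_real_sqrt[OF \<open>V t + d > 0\<close>]])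
         (use dV[OF that] in \<open>auto intro!: derivative_eq_intros\<close>)
    moreover have "inverse (sqrt (V t + d)) / 2 * V' t = w' t"
      unfolding w'_def w_def by (simp add: field_simps)
    ultimately show ?thesis unfolding w_def by simp
  qed
  define g where "g = (\<lambda>t. exp (rho * t) * (w t - K / rho))"
  define g' where "g' = (\<lambda>t. exp (rho * t) * (rho * (w t - K / rho) + w' t))"
  have dg: "(g has_real_derivative g' t) (at t within {0..T})" if "0 \<le> t" "t \<le> T" for t
  proof -
    have de: "((\<lambda>t. exp (rho * t)) has_real_derivative exp (rho * t) * rho) (at t within {0..T})"
      by (auto intro!: derivative_eq_intros)
    have "((\<lambda>t. exp (rho * t) * (w t - K / rho)) has_real_derivative
       (exp (rho * t) * rho) * (w t - K / rho) + (w' t - 0) * exp (rho * t)) (at t within {0..T})"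
      by (rule DERIV_mult[OF de DERIV_diff[OF dw[OF that] DERIV_const]])
    thus ?thesis unfolding g_def g'_def by (rule DERIV_cong) (simp add: algebra_simps)
  qed
  have g'neg: "g' t \<le> 0" if "0 \<le> t" "t \<le> T" for t
  proof -
    have wt: "w t > 0" "w t \<ge> sqrt d" using wpos[OF that] wpos'[OF that] by auto
    have w2: "(w t)^2 = V t + d" unfolding w_def using V0[OF that] d0 by simp
    have sV: "sqrt (V t) \<le> w t" unfolding w_def using d0 by simp
    have "2 * w t * (rho * (w t - K / rho) + w' t) = 2 * rho * (w t)^2 - 2 * K * w t + V' t"
      unfolding w'_def using wt rho by (simp add: field_simps power2_eq_square)
    also have "\<dots> \<le> 2 * rho * (V t + d) - 2 * K * w t - 2 * rho * V t + 2 * sqrt (V t) * U"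
      using ineq[OF that] w2 by simp
    also have "\<dots> = 2 * rho * sqrt d * (sqrt d - w t) + 2 * U * (sqrt (V t) - w t)"
      unfolding K_def using d0 by (simp add: algebra_simps power2_eq_square)
    also have "\<dots> \<le> 0"
    proof -
      have "2 * rho * sqrt d * (sqrt d - w t) \<le> 0" using rho d0 wt
        by (intro mult_nonneg_nonpos) auto
      moreover have "2 * U * (sqrt (V t) - w t) \<le> 0" using U sV by (intro mult_nonneg_nonpos) auto
      ultimately show ?thesis by simp
    qed
    finally have "2 * w t * (rho * (w t - K / rho) + w' t) \<le> 0" .
    hence "rho * (w t - K / rho) + w' t \<le> 0" using wt by (simp add: mult_le_0_iff)
    thus ?thesis unfolding g'_def by (simp add: mult_nonneg_nonpos)
  qed
  have "g T \<le> g 0" by (rule decr_interval[OF T dg g'neg])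
  hence "exp (rho * T) * (w T - K / rho) \<le> w 0 - K / rho" unfolding g_def by simp
  hence "w T - K / rho \<le> exp (- rho * T) * (w 0 - K / rho)"
    by (simp add: exp_minus field_simps)
  hence "w T \<le> exp (- rho * T) * w 0 + K / rho - exp (- rho * T) * (K / rho)"
    by (simp add: algebra_simps)
  moreover have "exp (- rho * T) * (K / rho) \<ge> 0" unfolding K_def using rho U d0 by simp
  ultimately have wT: "w T \<le> exp (- rho * T) * w 0 + K / rho" by linarith
  have "sqrt (V T) \<le> w T" unfolding w_def using d0 by simp
  moreover have "w 0 \<le> sqrt (V 0) + sqrt d" unfolding w_def
    by (rule sqrt_add_le_add_sqrt) (use V0[of 0] T d0 in auto)
  moreover have "exp (- rho * T) \<le> 1" using rho T by simp
  moreover have "K / rho = sqrt d + U / rho" unfolding K_def using rho by (simp add: field_simps)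
  ultimately have "sqrt (V T) \<le> exp (- rho * T) * (sqrt (V 0) + sqrt d) + sqrt d + U / rho"
    using wT by (smt (verit) exp_gt_zero mult_left_mono)
  also have "\<dots> \<le> exp (- rho * T) * sqrt (V 0) + 2 * sqrt d + U / rho"
    using \<open>exp (- rho * T) \<le> 1\<close> d0 by (simp add: algebra_simps mult_left_le_one_le)
  finally show "sqrt (V T) \<le> exp (- rho * T) * sqrt (V 0) + U / rho + e" using sd by simp
qed



lemma swap_sym_vec:
  fixes F :: "nat \<Rightarrow> nat \<Rightarrow> 'v::real_vector"
  assumes "symm n a"
  shows "(\<Sum>i<n. \<Sum>j<n. a i j *\<^sub>R F i j) = (\<Sum>i<n. \<Sum>j<n. a i j *\<^sub>R F j i)"
proof -
  have "(\<Sum>i<n. \<Sum>j<n. a i j *\<^sub>R F i j) = (\<Sum>j<n. \<Sum>i<n. a i j *\<^sub>R F i j)"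
    by (rule sum.swap)
  also have "\<dots> = (\<Sum>j<n. \<Sum>i<n. a j i *\<^sub>R F i j)"
    using assms unfolding symm_def by (intro sum.cong refl) auto
  finally show ?thesis .
qed

lemma sum_prod_bool:
  "(\<Sum>p\<in>A \<times> (UNIV::bool set). h p) = (\<Sum>i\<in>A. h (i, True) + h (i, False))"
proof -
  have "(\<Sum>p\<in>A \<times> (UNIV::bool set). h p) = (\<Sum>i\<in>A. \<Sum>k\<in>(UNIV::bool set). h (i, k))"
    by (rule sum.cartesian_product[symmetric, of "\<lambda>i k. h (i,k)", simplified])
  also have "\<dots> = (\<Sum>i\<in>A. h (i, True) + h (i, False))" by (simp add: UNIV_bool add.commute)
  finally show ?thesis .
qed

lemma cs_real:
  fixes a b c d :: "nat \<Rightarrow> real"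
  shows "(\<Sum>i<n. \<bar>a i\<bar> * \<bar>c i\<bar> + \<bar>b i\<bar> * \<bar>d i\<bar>) \<le> sqrt (\<Sum>i<n. (a i)^2 + (b i)^2) * sqrt (\<Sum>i<n. (c i)^2 + (d i)^2)"
proof -
  define f where "f = (\<lambda>(i, k). if k then a i else b i)"
  define g where "g = (\<lambda>(i, k). if k then c i else d i)"
  have "(\<Sum>p\<in>{..<n} \<times> (UNIV::bool set). \<bar>f p\<bar> * \<bar>g p\<bar>) \<le> L2_set f ({..<n} \<times> UNIV) * L2_set g ({..<n} \<times> UNIV)"
    by (rule L2_set_mult_ineq)
  thus ?thesis unfolding L2_set_def sum_prod_bool by (simp add: f_def g_def)
qed

lemma cs2:
  fixes A B F G :: "nat \<Rightarrow> 'v::real_inner"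
  shows "(\<Sum>i<n. inner (A i) (F i) + inner (B i) (G i))
     \<le> sqrt (\<Sum>i<n. (norm (A i))^2 + (norm (B i))^2) * sqrt (\<Sum>i<n. (norm (F i))^2 + (norm (G i))^2)"
proof -
  have "(\<Sum>i<n. inner (A i) (F i) + inner (B i) (G i)) \<le> (\<Sum>i<n. norm (A i) * norm (F i) + norm (B i) * norm (G i))"
    by (intro sum_mono add_mono norm_cauchy_schwarz)
  also have "\<dots> \<le> sqrt (\<Sum>i<n. (norm (A i))^2 + (norm (B i))^2) * sqrt (\<Sum>i<n. (norm (F i))^2 + (norm (G i))^2)"
    using cs_real[where a="\<lambda>i. norm (A i)" and c="\<lambda>i. norm (F i)" and b="\<lambda>i. norm (B i)" and d="\<lambda>i. norm (G i)" and n=n] by simp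
  finally show ?thesis .
qed

lemma norm2_basis: "(norm (x::'v::euclidean_space))^2 = (\<Sum>b\<in>Basis. (inner x b)^2)"
  unfolding power2_norm_eq_inner by (subst euclidean_inner) (simp add: power2_eq_square)

lemma key_vec:
  fixes A B :: "nat \<Rightarrow> 'v::euclidean_space"
  assumes sy: "symm n a" and mu: "mu \<ge> 0" and n0: "n > 0"
    and ray: "\<forall>w. (\<Sum>i<n. w i) = 0 \<longrightarrow> Qf n a w \<ge> mu * (\<Sum>i<n. (w i)^2)"
    and sAB: "(\<Sum>i<n. A i + B i) = 0"
  shows "(\<Sum>i<n. inner (A i) (\<Sum>j<n. a i j *\<^sub>R (A j - A i)))
       + (\<Sum>i<n. inner (A i) (B i - A i) + inner (B i) (A i - B i))
       \<le> - cc mu * (\<Sum>i<n. (norm (A i))^2 + (norm (B i))^2)"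
proof -
  define y where "y = (\<lambda>b i. inner (A i) b)"
  define z where "z = (\<lambda>b i. inner (B i) b)"
  have K: "Qf n a (y b) + (\<Sum>i<n. (y b i - z b i)^2) \<ge> cc mu * (\<Sum>i<n. (y b i)^2 + (z b i)^2)" for b
  proof (rule key_scalar[OF sy mu n0 ray])
    have "(\<Sum>i<n. y b i + z b i) = inner (\<Sum>i<n. A i + B i) b"
      unfolding y_def z_def by (simp add: inner_sum_left inner_add_left)
    thus "(\<Sum>i<n. y b i + z b i) = 0" using sAB by simp
  qed
  have e1: "inner (A i) (\<Sum>j<n. a i j *\<^sub>R (A j - A i)) = - (\<Sum>b\<in>Basis. y b i * Lv n a (y b) i)" for i
  proof -
    have "inner (\<Sum>j<n. a i j *\<^sub>R (A j - A i)) b = - Lv n a (y b) i" for b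
      unfolding Lv_def y_def
      by (simp add: inner_sum_left inner_diff_left algebra_simps sum_negf[symmetric])
    thus ?thesis by (simp add: euclidean_inner[of "A i" "\<Sum>j<n. a i j *\<^sub>R (A j - A i)"] y_def sum_negf[symmetric])
  qed
  have e2: "inner (A i) (B i - A i) + inner (B i) (A i - B i) = - (\<Sum>b\<in>Basis. (y b i - z b i)^2)" for i
  proof -
    have "inner (A i) (B i - A i) + inner (B i) (A i - B i) = - inner (A i - B i) (A i - B i)"
      by (simp add: inner_diff_left inner_diff_right inner_commute)
    also have "inner (A i - B i) (A i - B i) = (\<Sum>b\<in>Basis. (y b i - z b i)^2)"
      by (subst euclidean_inner) (simp add: y_def z_def inner_diff_left power2_eq_square)
    finally show ?thesis .
  qed
  have e3: "(norm (A i))^2 + (norm (B i))^2 = (\<Sum>b\<in>Basis. (y b i)^2 + (z b i)^2)" for i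
    unfolding norm2_basis y_def z_def by (simp add: sum.distrib)
  have "(\<Sum>i<n. inner (A i) (\<Sum>j<n. a i j *\<^sub>R (A j - A i)))
       + (\<Sum>i<n. inner (A i) (B i - A i) + inner (B i) (A i - B i))
       = - (\<Sum>b\<in>Basis. Qf n a (y b) + (\<Sum>i<n. (y b i - z b i)^2))"
  proof -
    have "(\<Sum>i<n. inner (A i) (\<Sum>j<n. a i j *\<^sub>R (A j - A i))) = - (\<Sum>b\<in>Basis. Qf n a (y b))"
      unfolding e1 Qf_def sum_negf by (rule arg_cong[where f=uminus], rule sum.swap)
    moreover have "(\<Sum>i<n. inner (A i) (B i - A i) + inner (B i) (A i - B i))
        = - (\<Sum>b\<in>Basis. (\<Sum>i<n. (y b i - z b i)^2))"
      unfolding e2 sum_negf by (rule arg_cong[where f=uminus], rule sum.swap)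
    ultimately show ?thesis by (simp add: sum.distrib)
  qed
  also have "\<dots> \<le> - (\<Sum>b\<in>Basis. cc mu * (\<Sum>i<n. (y b i)^2 + (z b i)^2))"
    using K by (simp add: sum_mono)
  also have "\<dots> = - cc mu * (\<Sum>i<n. (norm (A i))^2 + (norm (B i))^2)"
    unfolding e3 by (simp add: sum_distrib_left[symmetric] sum.swap[of _ Basis])
  finally show ?thesis .
qed



lemma cc_pos: assumes "mu > 0" shows "cc mu > 0"
proof -
  have "sqrt (mu^2 + 4) < sqrt ((mu + 2)^2)"
    using assms by (intro real_sqrt_less_mono) (simp add: power2_eq_square algebra_simps)
  also have "\<dots> = mu + 2" using assms by simp
  finally show ?thesis unfolding cc_def by simp
qed

lemma conservation:
  fixes r f fa fb xa xb :: "nat \<Rightarrow> real \<Rightarrow> 'v::euclidean_space"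
  assumes sy: "symm n a" and ts: "tracking_system n a \<kappa> r f ra0 rb0 fa fb xa xb"
    and t: "t \<ge> 0"
  shows "(\<Sum>i<n. xa i t + xb i t) = 2 *\<^sub>R (\<Sum>i<n. r i t)"
proof -
  define G where "G = (\<lambda>t. (\<Sum>i<n. xa i t + xb i t) - 2 *\<^sub>R (\<Sum>i<n. r i t))"
  have dG: "(G has_derivative (\<lambda>h. 0)) (at s within {0..})" if s: "s \<in> {0..}" for s
  proof -
    define Da where "Da = (\<lambda>i. fa i s + \<kappa> *\<^sub>R (\<Sum>j<n. a i j *\<^sub>R (xa j s - xa i s)) + \<kappa> *\<^sub>R (xb i s - xa i s))"
    define Db where "Db = (\<lambda>i. fb i s + \<kappa> *\<^sub>R (xa i s - xb i s))"
    have da: "(xa i has_vector_derivative Da i) (at s within {0..})" if "i < n" for i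
      using ts that s unfolding tracking_system_def Da_def by auto
    have db: "(xb i has_vector_derivative Db i) (at s within {0..})" if "i < n" for i
      using ts that s unfolding tracking_system_def Db_def by auto
    have dr: "(r i has_vector_derivative f i s) (at s within {0..})" if "i < n" for i
      using ts that s unfolding tracking_system_def by auto
    have "(G has_vector_derivative (\<Sum>i<n. Da i + Db i) - 2 *\<^sub>R (\<Sum>i<n. f i s)) (at s within {0..})"
      unfolding G_def
      by (intro has_vector_derivative_diff has_vector_derivative_sum has_vector_derivative_add da db
          bounded_linear.has_vector_derivative[OF bounded_linear_scaleR_right] dr) auto
    moreover have "(\<Sum>i<n. Da i + Db i) - 2 *\<^sub>R (\<Sum>i<n. f i s) = 0"
    proof -
      have ff: "fa i s + fb i s = 2 *\<^sub>R f i s" if "i < n" for i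
        using ts that s unfolding tracking_system_def by auto
      have "(\<Sum>i<n. Da i + Db i) = (\<Sum>i<n. 2 *\<^sub>R f i s + \<kappa> *\<^sub>R (\<Sum>j<n. a i j *\<^sub>R (xa j s - xa i s)))"
        unfolding Da_def Db_def using ff by (intro sum.cong refl) (simp add: algebra_simps)
      also have "\<dots> = 2 *\<^sub>R (\<Sum>i<n. f i s) + \<kappa> *\<^sub>R (\<Sum>i<n. \<Sum>j<n. a i j *\<^sub>R (xa j s - xa i s))"
        by (simp add: sum.distrib scaleR_sum_right)
      also have "(\<Sum>i<n. \<Sum>j<n. a i j *\<^sub>R (xa j s - xa i s)) = 0"
      proof -
        have "(\<Sum>i<n. \<Sum>j<n. a i j *\<^sub>R (xa j s - xa i s))
            = (\<Sum>i<n. \<Sum>j<n. a i j *\<^sub>R xa j s) - (\<Sum>i<n. \<Sum>j<n. a i j *\<^sub>R xa i s)"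
          by (simp add: scaleR_diff_right sum_subtractf)
        also have "(\<Sum>i<n. \<Sum>j<n. a i j *\<^sub>R xa j s) = (\<Sum>i<n. \<Sum>j<n. a i j *\<^sub>R xa i s)"
          by (rule swap_sym_vec[OF sy])
        finally show ?thesis by simp
      qed
      finally show ?thesis by simp
    qed
    ultimately have "(G has_vector_derivative 0) (at s within {0..})" by simp
    thus ?thesis by (simp add: has_vector_derivative_def)
  qed
  obtain c where c: "\<forall>x\<in>{0..}. G x = c"
    using has_derivative_zero_constant[of "{0::real..}" G] dG by (auto simp: convex_real_interval)
  have "G 0 = 0"
  proof -
    have "(\<Sum>i<n. xa i 0 + xb i 0) = (\<Sum>i<n. 2 *\<^sub>R r i 0)"
      using ts unfolding tracking_system_def by (intro sum.cong refl) auto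
    thus ?thesis unfolding G_def by (simp add: scaleR_sum_right)
  qed
  hence "G t = 0" using c t by auto
  thus ?thesis unfolding G_def by simp
qed



lemma dnorm2:
  fixes g :: "real \<Rightarrow> 'v::real_inner"
  assumes "(g has_vector_derivative g') (at t within S)"
  shows "((\<lambda>t. (norm (g t))^2) has_real_derivative 2 * inner (g t) g') (at t within S)"
proof -
  have "((\<lambda>t. inner (g t) (g t)) has_vector_derivative (inner (g t) g' + inner g' (g t))) (at t within S)"
    by (rule bounded_bilinear.has_vector_derivative[OF bounded_bilinear_inner assms assms])
  thus ?thesis unfolding has_real_derivative_iff_has_vector_derivative power2_norm_eq_inner
    by (rule has_vector_derivative_eq_rhs) (simp add: inner_commute)
qed

lemma sum_lin4:
  fixes p q r s :: "nat \<Rightarrow> real"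
  shows "(\<Sum>i\<in>I. p i - q i + k * (r i + s i)) = (\<Sum>i\<in>I. p i) - (\<Sum>i\<in>I. q i) + k * ((\<Sum>i\<in>I. r i) + (\<Sum>i\<in>I. s i))"
  by (simp add: sum.distrib sum_subtractf sum_distrib_left[symmetric])

lemma core:
  fixes r f fa fb xa xb :: "nat \<Rightarrow> real \<Rightarrow> 'v::euclidean_space"
  assumes sy: "symm n a" and n0: "n > 0" and mu: "mu \<ge> 0"
    and ray: "\<forall>w. (\<Sum>i<n. w i) = 0 \<longrightarrow> Qf n a w \<ge> mu * (\<Sum>i<n. (w i)^2)"
    and kp: "\<kappa> > 0" and rho: "rho = \<kappa> * cc mu" and rhop: "rho > 0"
    and ts: "tracking_system n a \<kappa> r f ra0 rb0 fa fb xa xb"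
    and T: "T \<ge> 0" and U: "U \<ge> 0" and Ub: "\<forall>t\<in>{0..T}. inp_norm n fa fb t \<le> U"
  shows "err_norm n r xa xb T \<le> exp (- rho * T) * err_norm n r xa xb 0 + U / rho"
proof -
  define m where "m = ref_avg n r"
  define ea where "ea = (\<lambda>i t. xa i t - m t)"
  define eb where "eb = (\<lambda>i t. xb i t - m t)"
  define V where "V = (\<lambda>t. \<Sum>i<n. (norm (ea i t))^2 + (norm (eb i t))^2)"
  have errV: "err_norm n r xa xb t = sqrt (V t)" for t
    unfolding err_norm_def V_def ea_def eb_def m_def ..
  define m' where "m' = (\<lambda>t. (1 / real n) *\<^sub>R (\<Sum>j<n. f j t))"
  define Da where "Da = (\<lambda>i t. fa i t + \<kappa> *\<^sub>R (\<Sum>j<n. a i j *\<^sub>R (xa j t - xa i t)) + \<kappa> *\<^sub>R (xb i t - xa i t))"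
  define Db where "Db = (\<lambda>i t. fb i t + \<kappa> *\<^sub>R (xa i t - xb i t))"
  define V' where "V' = (\<lambda>t. \<Sum>i<n. 2 * inner (ea i t) (Da i t - m' t) + 2 * inner (eb i t) (Db i t - m' t))"
  have dm: "(m has_vector_derivative m' t) (at t within {0..})" if "t \<ge> 0" for t
  proof -
    have "((\<lambda>t. (1 / real n) *\<^sub>R (\<Sum>j<n. r j t)) has_vector_derivative m' t) (at t within {0..})"
      unfolding m'_def
      by (intro bounded_linear.has_vector_derivative[OF bounded_linear_scaleR_right] has_vector_derivative_sum)
         (use ts that in \<open>auto simp: tracking_system_def\<close>)
    thus ?thesis unfolding m_def ref_avg_def[abs_def] .
  qed
  have dea: "(ea i has_vector_derivative Da i t - m' t) (at t within {0..})" if "i < n" "t \<ge> 0" for i t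
    unfolding ea_def
    by (intro has_vector_derivative_diff dm) (use ts that in \<open>auto simp: tracking_system_def Da_def\<close>)
  have deb: "(eb i has_vector_derivative Db i t - m' t) (at t within {0..})" if "i < n" "t \<ge> 0" for i t
    unfolding eb_def
    by (intro has_vector_derivative_diff dm) (use ts that in \<open>auto simp: tracking_system_def Db_def\<close>)
  have dV: "(V has_real_derivative V' t) (at t within {0..T})" if "0 \<le> t" "t \<le> T" for t
  proof -
    have "(V has_real_derivative V' t) (at t within {0..})"
      unfolding V_def V'_def
      by (intro DERIV_sum DERIV_add dnorm2 dea deb) (use that in auto)
    thus ?thesis by (rule has_field_derivative_subset) auto
  qed
  have V0: "V t \<ge> 0" for t unfolding V_def by (intro sum_nonneg) auto
  have sumz: "(\<Sum>i<n. ea i t + eb i t) = 0" if "t \<ge> 0" for t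
  proof -
    have "(\<Sum>i<n. ea i t + eb i t) = (\<Sum>i<n. (xa i t + xb i t) - 2 *\<^sub>R m t)"
      unfolding ea_def eb_def by (intro sum.cong refl) (simp add: algebra_simps scaleR_2)
    also have "\<dots> = (\<Sum>i<n. xa i t + xb i t) - real n *\<^sub>R (2 *\<^sub>R m t)"
      by (simp add: sum_subtractf sum_constant_scaleR)
    also have "\<dots> = 2 *\<^sub>R (\<Sum>i<n. r i t) - real n *\<^sub>R (2 *\<^sub>R m t)"
      using conservation[OF sy ts that] by simp
    also have "\<dots> = 0" using n0 unfolding m_def ref_avg_def by simp
    finally show ?thesis .
  qed
  have ineq: "V' t \<le> -2 * rho * V t + 2 * sqrt (V t) * U" if t: "0 \<le> t" "t \<le> T" for t
  proof -
    define A where "A = (\<lambda>i. ea i t)"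
    define B where "B = (\<lambda>i. eb i t)"
    define W where "W = (\<lambda>i. \<Sum>j<n. a i j *\<^sub>R (A j - A i))"
    have Da': "Da i t = fa i t + \<kappa> *\<^sub>R W i + \<kappa> *\<^sub>R (B i - A i)" for i
      unfolding Da_def W_def A_def B_def ea_def eb_def by simp
    have Db': "Db i t = fb i t + \<kappa> *\<^sub>R (A i - B i)" for i
      unfolding Db_def A_def B_def ea_def eb_def by simp
    have pw: "inner (A i) (Da i t - m' t) + inner (B i) (Db i t - m' t)
        = (inner (A i) (fa i t) + inner (B i) (fb i t)) - inner (A i + B i) (m' t)
          + \<kappa> * (inner (A i) (W i) + (inner (A i) (B i - A i) + inner (B i) (A i - B i)))" for i
      unfolding Da' Db' by (simp add: inner_add_right inner_diff_right inner_add_left algebra_simps)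
    have "V' t = 2 * ((\<Sum>i<n. inner (A i) (fa i t) + inner (B i) (fb i t)) - inner (\<Sum>i<n. A i + B i) (m' t)
          + \<kappa> * ((\<Sum>i<n. inner (A i) (W i)) + (\<Sum>i<n. inner (A i) (B i - A i) + inner (B i) (A i - B i))))"
    proof -
      have "V' t = 2 * (\<Sum>i<n. inner (A i) (Da i t - m' t) + inner (B i) (Db i t - m' t))"
        unfolding V'_def A_def B_def by (simp add: sum_distrib_left algebra_simps)
      also have "\<dots> = 2 * (\<Sum>i<n. (inner (A i) (fa i t) + inner (B i) (fb i t)) - inner (A i + B i) (m' t)
          + \<kappa> * (inner (A i) (W i) + (inner (A i) (B i - A i) + inner (B i) (A i - B i))))"
        unfolding pw ..
      also have "\<dots> = 2 * ((\<Sum>i<n. inner (A i) (fa i t) + inner (B i) (fb i t)) - inner (\<Sum>i<n. A i + B i) (m' t)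
          + \<kappa> * ((\<Sum>i<n. inner (A i) (W i)) + (\<Sum>i<n. inner (A i) (B i - A i) + inner (B i) (A i - B i))))"
        unfolding inner_sum_left by (rule arg_cong[where f="\<lambda>x. 2 * x"], rule sum_lin4)
      finally show ?thesis .
    qed
    also have "inner (\<Sum>i<n. A i + B i) (m' t) = 0" using sumz[OF t(1)] unfolding A_def B_def by simp
    also have "(\<Sum>i<n. inner (A i) (fa i t) + inner (B i) (fb i t)) \<le> sqrt (V t) * U"
    proof -
      have "(\<Sum>i<n. inner (A i) (fa i t) + inner (B i) (fb i t)) \<le> sqrt (V t) * inp_norm n fa fb t"
        using cs2[where n=n and A=A and F="\<lambda>i. fa i t" and B=B and G="\<lambda>i. fb i t"] unfolding V_def inp_norm_def A_def B_def .
      also have "\<dots> \<le> sqrt (V t) * U" using Ub t V0[of t] by (intro mult_left_mono) auto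
      finally show ?thesis .
    qed
    also have "(\<Sum>i<n. inner (A i) (W i)) + (\<Sum>i<n. inner (A i) (B i - A i) + inner (B i) (A i - B i))
        \<le> - cc mu * V t"
      unfolding W_def V_def A_def B_def
      by (rule key_vec[OF sy mu n0 ray]) (use sumz[OF t(1)] in simp)
    finally show ?thesis using kp unfolding rho by (simp add: algebra_simps mult_left_mono)
  qed
  have "sqrt (V T) \<le> exp (- rho * T) * sqrt (V 0) + U / rho"
    by (rule compare[OF rhop U T dV V0 ineq])
  thus ?thesis unfolding errV .
qed



lemma inp_bdd:
  assumes ts: "tracking_system n a \<kappa> r f ra0 rb0 fa fb xa xb"
  shows "bdd_above (inp_norm n fa fb ` {0..})"
proof -
  have "bounded (\<Union>i<n. fa i ` {0..} \<union> fb i ` {0..})"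
    using ts unfolding tracking_system_def by (intro bounded_UN) auto
  then obtain B where B: "\<forall>x\<in>(\<Union>i<n. fa i ` {0..} \<union> fb i ` {0..}). norm x \<le> B"
    unfolding bounded_iff by blast
  have "inp_norm n fa fb s \<le> sqrt (\<Sum>i<n. B^2 + B^2)" if s: "s \<ge> 0" for s
    unfolding inp_norm_def
  proof (intro real_sqrt_le_mono sum_mono add_mono power_mono)
    fix i assume "i \<in> {..<n}"
    thus "norm (fa i s) \<le> B" "norm (fb i s) \<le> B" using B s by auto
  qed auto
  thus ?thesis by (intro bdd_aboveI2[where M="sqrt (\<Sum>i<n. B^2 + B^2)"]) auto
qed

lemma inp_nonneg: "inp_norm n fa fb s \<ge> 0"
  unfolding inp_norm_def by (intro real_sqrt_ge_zero sum_nonneg) auto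

lemma err_nonneg: "err_norm n r xa xb s \<ge> 0"
  unfolding err_norm_def by (intro real_sqrt_ge_zero sum_nonneg) auto

lemma comp_le_err:
  assumes "i < n"
  shows "norm (xa i t - ref_avg n r t) \<le> err_norm n r xa xb t"
    and "norm (xb i t - ref_avg n r t) \<le> err_norm n r xa xb t"
proof -
  let ?g = "\<lambda>i. (norm (xa i t - ref_avg n r t))^2 + (norm (xb i t - ref_avg n r t))^2"
  have le: "?g i \<le> (\<Sum>i<n. ?g i)"
    by (rule member_le_sum) (use assms in auto)
  have "norm (xa i t - ref_avg n r t) = sqrt ((norm (xa i t - ref_avg n r t))^2)" by simp
  also have "\<dots> \<le> err_norm n r xa xb t" unfolding err_norm_def
    using le by (intro real_sqrt_le_mono) (smt (verit) zero_le_power2)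
  finally show "norm (xa i t - ref_avg n r t) \<le> err_norm n r xa xb t" .
  have "norm (xb i t - ref_avg n r t) = sqrt ((norm (xb i t - ref_avg n r t))^2)" by simp
  also have "\<dots> \<le> err_norm n r xa xb t" unfolding err_norm_def
    using le by (intro real_sqrt_le_mono) (smt (verit) zero_le_power2)
  finally show "norm (xb i t - ref_avg n r t) \<le> err_norm n r xa xb t" .
qed

lemma exp_decay: assumes "rho > 0" shows "((\<lambda>t. exp (- rho * t)) \<longlongrightarrow> (0::real)) at_top"
proof -
  have "filterlim (\<lambda>t. rho * t) at_top at_top"
    using assms by (intro filterlim_tendsto_pos_mult_at_top[OF tendsto_const] filterlim_ident) auto
  hence "filterlim (\<lambda>t. - (rho * t)) at_bot at_top"
    by (simp add: filterlim_uminus_at_bot)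
  from filterlim_compose[OF exp_at_bot this] show ?thesis by simp
qed

theorem theorem2:
  fixes n :: nat and a :: "nat \<Rightarrow> nat \<Rightarrow> real" and \<kappa> :: real
  assumes "n \<ge> 2"
    and "undirected_graph n a"
    and "graph_connected n a"
    and "\<kappa> > 0"
  shows
    \<comment> \<open>input-to-state stability (uniform KL / K bounds over all admissible data)\<close>
    "(\<exists>\<beta> \<gamma>. class_KL \<beta> \<and> class_K \<gamma> \<and>
       (\<forall>(r :: nat \<Rightarrow> real \<Rightarrow> 'v::euclidean_space) f ra0 rb0 fa fb xa xb.
          tracking_system n a \<kappa> r f ra0 rb0 fa fb xa xb \<longrightarrow>
          (\<forall>t\<ge>0. err_norm n r xa xb t
                   \<le> \<beta> (err_norm n r xa xb 0) t
                     + \<gamma> (Sup (inp_norm n fa fb ` {0..t})))))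
     \<and>
     \<comment> \<open>ultimate boundedness of every tracking error\<close>
     (\<forall>(r :: nat \<Rightarrow> real \<Rightarrow> 'v) f ra0 rb0 fa fb xa xb.
          tracking_system n a \<kappa> r f ra0 rb0 fa fb xa xb \<longrightarrow>
          (\<exists>B T. \<forall>t\<ge>T. \<forall>i<n. norm (xa i t - ref_avg n r t) \<le> B
                              \<and> norm (xb i t - ref_avg n r t) \<le> B))
     \<and>
     \<comment> \<open>exponential approach to the ultimate bound with rate at least c\<close>
     (\<exists>K G. K \<ge> 0 \<and> G \<ge> 0 \<and>
       (\<forall>(r :: nat \<Rightarrow> real \<Rightarrow> 'v) f ra0 rb0 fa fb xa xb.
          tracking_system n a \<kappa> r f ra0 rb0 fa fb xa xb \<longrightarrow>
          (\<forall>t\<ge>0. err_norm n r xa xb t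
                   \<le> K * err_norm n r xa xb 0
                       * exp (- (\<kappa> / 2 * (lambda2 (laplacian n a) + 2
                                 - sqrt ((lambda2 (laplacian n a))\<^sup>2 + 4))) * t)
                     + G * Sup (inp_norm n fa fb ` {0..}))))"
proof -
  have sy: "symm n a" using assms(2) unfolding undirected_graph_def symm_def by auto
  have n0: "n > 0" using assms(1) by simp
  obtain mu where mup: "mu > 0"
    and ray: "\<forall>y. (\<Sum>i<n. y i) = 0 \<longrightarrow> Qf n a y \<ge> mu * (\<Sum>i<n. (y i)^2)"
    and l2: "lambda2 (laplacian n a) \<le> mu"
    using rayleigh[OF assms(1-3)] by blast
  define rho where "rho = \<kappa> * cc mu"
  have rhop: "rho > 0" using assms(4) cc_pos[OF mup] unfolding rho_def by simp
  have mu0: "mu \<ge> 0" using mup by simp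
  note C = core[OF sy n0 mu0 ray assms(4) rho_def rhop]
  have supfacts: "Sup (inp_norm n fa fb ` {0..t}) \<ge> 0
      \<and> (\<forall>s\<in>{0..t}. inp_norm n fa fb s \<le> Sup (inp_norm n fa fb ` {0..t}))
      \<and> Sup (inp_norm n fa fb ` {0..t}) \<le> Sup (inp_norm n fa fb ` {0..})"
    if ts: "tracking_system n a \<kappa> r f ra0 rb0 fa fb xa xb" and t: "t \<ge> 0"
    for r f fa fb xa xb :: "nat \<Rightarrow> real \<Rightarrow> 'v" and ra0 rb0 and t :: real
  proof -
    have bA: "bdd_above (inp_norm n fa fb ` {0..})" by (rule inp_bdd[OF ts])
    hence bt: "bdd_above (inp_norm n fa fb ` {0..t})" by (rule bdd_above_mono) auto
    have up: "\<forall>s\<in>{0..t}. inp_norm n fa fb s \<le> Sup (inp_norm n fa fb ` {0..t})"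
      using bt by (auto intro: cSup_upper)
    have "0 \<le> inp_norm n fa fb 0" by (rule inp_nonneg)
    also have "\<dots> \<le> Sup (inp_norm n fa fb ` {0..t})" using up t by auto
    finally have "Sup (inp_norm n fa fb ` {0..t}) \<ge> 0" .
    moreover have "Sup (inp_norm n fa fb ` {0..t}) \<le> Sup (inp_norm n fa fb ` {0..})"
      using t bA by (intro cSup_subset_mono) auto
    ultimately show ?thesis using up by blast
  qed
  have supinf: "Sup (inp_norm n fa fb ` {0..}) \<ge> 0
      \<and> (\<forall>s\<in>{0..}. inp_norm n fa fb s \<le> Sup (inp_norm n fa fb ` {0..}))"
    if ts: "tracking_system n a \<kappa> r f ra0 rb0 fa fb xa xb"
    for r f fa fb xa xb :: "nat \<Rightarrow> real \<Rightarrow> 'v" and ra0 rb0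
  proof -
    have bA: "bdd_above (inp_norm n fa fb ` {0..})" by (rule inp_bdd[OF ts])
    have up: "\<forall>s\<in>{0..}. inp_norm n fa fb s \<le> Sup (inp_norm n fa fb ` {0..})"
      using bA by (auto intro: cSup_upper)
    have "0 \<le> inp_norm n fa fb 0" by (rule inp_nonneg)
    also have "\<dots> \<le> Sup (inp_norm n fa fb ` {0..})" using up by auto
    finally show ?thesis using up by blast
  qed
  have bound_inf: "err_norm n r xa xb t \<le> exp (- rho * t) * err_norm n r xa xb 0 + Sup (inp_norm n fa fb ` {0..}) / rho"
    if ts: "tracking_system n a \<kappa> r f ra0 rb0 fa fb xa xb" and t: "t \<ge> 0"
    for r f fa fb xa xb :: "nat \<Rightarrow> real \<Rightarrow> 'v" and ra0 rb0 and t :: real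
    using supinf[OF ts] t by (intro C[OF ts t]) auto
  have P1: "\<exists>\<beta> \<gamma>. class_KL \<beta> \<and> class_K \<gamma> \<and>
       (\<forall>(r :: nat \<Rightarrow> real \<Rightarrow> 'v::euclidean_space) f ra0 rb0 fa fb xa xb.
          tracking_system n a \<kappa> r f ra0 rb0 fa fb xa xb \<longrightarrow>
          (\<forall>t\<ge>0. err_norm n r xa xb t
                   \<le> \<beta> (err_norm n r xa xb 0) t
                     + \<gamma> (Sup (inp_norm n fa fb ` {0..t}))))"
  proof (intro exI conjI allI impI)
    show "class_KL (\<lambda>s t. s * exp (- rho * t))"
      unfolding class_KL_def class_K_def
    proof (intro conjI allI impI)
      fix t :: real assume "t \<ge> 0"
      show "continuous_on {0..} (\<lambda>s. s * exp (- rho * t))" by (intro continuous_intros)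
      show "0 * exp (- rho * t) = 0" by simp
      show "strict_mono_on {0..} (\<lambda>s. s * exp (- rho * t))"
        by (intro strict_mono_onI) (simp add: mult_strict_right_mono)
    next
      fix s :: real assume s: "s \<ge> 0"
      show "antimono_on {0..} (\<lambda>t. s * exp (- rho * t))"
        by (intro monotone_onI mult_left_mono) (use s rhop in auto)
      show "((\<lambda>t. s * exp (- rho * t)) \<longlongrightarrow> 0) at_top"
        by (rule tendsto_mult_right_zero[OF exp_decay[OF rhop]])
    qed
    show "class_K (\<lambda>s. s / rho)"
      unfolding class_K_def
      by (intro conjI continuous_intros strict_mono_onI) (use rhop in \<open>auto simp: divide_strict_right_mono\<close>)
    fix r :: "nat \<Rightarrow> real \<Rightarrow> 'v" and f ra0 rb0 fa fb xa xb and t :: real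
    assume ts: "tracking_system n a \<kappa> r f ra0 rb0 fa fb xa xb" and t: "t \<ge> 0"
    have "err_norm n r xa xb t \<le> exp (- rho * t) * err_norm n r xa xb 0 + Sup (inp_norm n fa fb ` {0..t}) / rho"
      using supfacts[OF ts t] by (intro C[OF ts t]) auto
    thus "err_norm n r xa xb t \<le> err_norm n r xa xb 0 * exp (- rho * t) + Sup (inp_norm n fa fb ` {0..t}) / rho"
      by (simp add: mult.commute)
  qed
  have P2: "\<forall>(r :: nat \<Rightarrow> real \<Rightarrow> 'v) f ra0 rb0 fa fb xa xb.
          tracking_system n a \<kappa> r f ra0 rb0 fa fb xa xb \<longrightarrow>
          (\<exists>B T. \<forall>t\<ge>T. \<forall>i<n. norm (xa i t - ref_avg n r t) \<le> B
                              \<and> norm (xb i t - ref_avg n r t) \<le> B)"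
  proof (intro allI impI)
    fix r :: "nat \<Rightarrow> real \<Rightarrow> 'v" and f ra0 rb0 fa fb xa xb
    assume ts: "tracking_system n a \<kappa> r f ra0 rb0 fa fb xa xb"
    define B where "B = err_norm n r xa xb 0 + Sup (inp_norm n fa fb ` {0..}) / rho"
    have "\<forall>t\<ge>0. \<forall>i<n. norm (xa i t - ref_avg n r t) \<le> B \<and> norm (xb i t - ref_avg n r t) \<le> B"
    proof (intro allI impI)
      fix t :: real and i assume t: "t \<ge> 0" and i: "i < n"
      have "err_norm n r xa xb t \<le> exp (- rho * t) * err_norm n r xa xb 0 + Sup (inp_norm n fa fb ` {0..}) / rho"
        by (rule bound_inf[OF ts t])
      also have "exp (- rho * t) * err_norm n r xa xb 0 \<le> 1 * err_norm n r xa xb 0"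
        using rhop t err_nonneg[of n r xa xb 0] by (intro mult_right_mono) auto
      finally have "err_norm n r xa xb t \<le> B" unfolding B_def by simp
      thus "norm (xa i t - ref_avg n r t) \<le> B \<and> norm (xb i t - ref_avg n r t) \<le> B"
        using comp_le_err[OF i, where xa=xa and xb=xb and t=t and r=r] by linarith
    qed
    thus "\<exists>B T. \<forall>t\<ge>T. \<forall>i<n. norm (xa i t - ref_avg n r t) \<le> B \<and> norm (xb i t - ref_avg n r t) \<le> B"
      by blast
  qed
  have P3: "\<exists>K G. K \<ge> 0 \<and> G \<ge> 0 \<and>
       (\<forall>(r :: nat \<Rightarrow> real \<Rightarrow> 'v) f ra0 rb0 fa fb xa xb.
          tracking_system n a \<kappa> r f ra0 rb0 fa fb xa xb \<longrightarrow>
          (\<forall>t\<ge>0. err_norm n r xa xb t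
                   \<le> K * err_norm n r xa xb 0
                       * exp (- (\<kappa> / 2 * (lambda2 (laplacian n a) + 2
                                 - sqrt ((lambda2 (laplacian n a))\<^sup>2 + 4))) * t)
                     + G * Sup (inp_norm n fa fb ` {0..})))"
  proof (rule exI[of _ 1], rule exI[of _ "1 / rho"], intro conjI allI impI)
    show "(0::real) \<le> 1" by simp
    show "0 \<le> 1 / rho" using rhop by simp
    fix r :: "nat \<Rightarrow> real \<Rightarrow> 'v" and f ra0 rb0 fa fb xa xb and t :: real
    assume ts: "tracking_system n a \<kappa> r f ra0 rb0 fa fb xa xb" and t: "t \<ge> 0"
    define c where "c = \<kappa> / 2 * (lambda2 (laplacian n a) + 2 - sqrt ((lambda2 (laplacian n a))\<^sup>2 + 4))"
    have "c = \<kappa> * cc (lambda2 (laplacian n a))" unfolding c_def cc_def by simp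
    also have "\<dots> \<le> rho" unfolding rho_def using assms(4) cc_mono[OF l2] by (simp add: mult_left_mono)
    finally have crho: "c \<le> rho" .
    have "exp (- rho * t) \<le> exp (- c * t)" using crho t by (simp add: mult_right_mono)
    hence "exp (- rho * t) * err_norm n r xa xb 0 \<le> exp (- c * t) * err_norm n r xa xb 0"
      using err_nonneg[of n r xa xb 0] by (rule mult_right_mono)
    with bound_inf[OF ts t]
    have "err_norm n r xa xb t \<le> exp (- c * t) * err_norm n r xa xb 0 + Sup (inp_norm n fa fb ` {0..}) / rho"
      by linarith
    thus "err_norm n r xa xb t \<le> 1 * err_norm n r xa xb 0
                       * exp (- (\<kappa> / 2 * (lambda2 (laplacian n a) + 2
                                 - sqrt ((lambda2 (laplacian n a))\<^sup>2 + 4))) * t)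
                     + 1 / rho * Sup (inp_norm n fa fb ` {0..})"
      unfolding c_def by (simp add: mult.commute)
  qed
  show ?thesis using P1 P2 P3 by blast
qed

end
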